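(* Let $N\ge 2$, let $\{u_j\}_{j=1}^{N-1}$ and $\{v_j\}_{j=1}^{N-1}$ be sequences of positive real numbers related through $v_j=\frac{1}{u_{N-j}}$ for $j=1,\dots,N-1$, let $H\in\mathbb{R}^{(N-1)\times(N-1)}$ be lower triangular, and let $\tau>0$. Then the following are equivalent: (a) (primal Lyapunov condition) For the algorithm with H-matrix $H$ and the sequence $\{u_j\}$, the quantity $U_N-\tau\|\tilde{A}x_N\|^2-\langle \tilde{A}x_N, x_N-y_0\rangle$, written as a vector quadratic form in $\tilde{A}x_1,\dots,\tilde{A}x_N$, is nonnegative for all values of $\tilde{A}x_1,\dots,\tilde{A}x_N\in\mathbb{R}^d$; i.e. $\tau\|\tilde{A}x_N\|^2+\langle \tilde{A}x_N, x_N-y_0\rangle\le U_N$ holds identically. (b) (dual Lyapunov condition) For the algorithm with H-matrix $H^{\mathrm{A}}$ (the anti-diagonal transpose of $H$, $(H^{\mathrm{A}})_{k,j}=H_{N-j,N-k}$) and the sequence $\{v_j\}$, the quantity $-V_0-\tau\|\tilde{A}x_N\|^2-\langle \tilde{A}x_N, x_N-y_0\rangle$, written as a vector quadratic form in $\tilde{A}x_1,\dots,\tilde{A}x_N$, is nonnegative for all values of $\tilde{A}x_1,\dots,\tilde{A}x_N\in\mathbb{R}^d$; i.e. $V_0\le -\tau\|\tilde{A}x_N\|^2-\langle \tilde{A}x_N, x_N-y_0\rangle$ holds identically.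
   Context: Let $T\colon\mathbb{R}^d\to\mathbb{R}^d$ be nonexpansive and $A=2(I+T)^{-1}-I$ the associated maximally monotone operator, so $T=2J_A-I$ with resolvent $J_A=(I+A)^{-1}$. A fixed-point algorithm with lower-triangular H-matrix $H=(h_{k,j})\in\mathbb{R}^{(N-1)\times(N-1)}$ is $y_{k+1}=y_k-\sum_{j=0}^{k}h_{k+1,j+1}(y_j-Ty_j)$ for $k=0,\dots,N-2$. Set $x_{k+1}=J_A(y_k)$ for $k=0,\dots,N-1$ and $\tilde{A}x_{k+1}=y_k-x_{k+1}\in A x_{k+1}$, so that $y_j-Ty_j=2\tilde{A}x_{j+1}$ and $\|y_{N-1}-Ty_{N-1}\|^2=4\|\tilde{A}x_N\|^2$. Using these relations, all of $x_1,\dots,x_N$, $y_1,\dots,y_{N-1}$ and $x_N-y_0$ are linear combinations of $\tilde{A}x_1,\dots,\tilde{A}x_N$ (and $y_0$ cancels in differences), so the expressions in the claim are vector quadratic forms $\sum_{i,j}s_{i,j}\langle g_i,g_j\rangle$ in $g_k=\tilde{A}x_k$, whose coefficients depend on the H-matrix, the weights, and $\tau$. Primal Lyapunov sequence: $U_1=0$, $U_{j+1}=U_j-u_j\langle x_{j+1}-x_j,\tilde{A}x_{j+1}-\tilde{A}x_j\rangle$ for $j=1,\dots,N-1$. Dual Lyapunov sequence: $V_{N-1}=0$, $V_j=V_{j+1}+v_{j+1}\langle x_N-x_{j+1},\tilde{A}x_N-\tilde{A}x_{j+1}\rangle$ for $j=0,\dots,N-2$. By monotonicity, $U_j$ is nonincreasing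 and $V_j$ is nonincreasing, so either condition yields $\|\tilde{A}x_N\|^2\le \|y_0-y_\star\|^2/\tau^2$ for $y_\star\in\mathrm{Fix}\,T$. *)

theory Defs
  imports "HOL-Analysis.Analysis"
begin

text \<open>H-matrices are 1-indexed functions nat => nat => real; only entries with
  1 <= j <= k <= N-1 matter.  g k stands for the vector (tilde A) x_k, k = 1..N.\<close>

definition lower_tri :: "nat \<Rightarrow> (nat \<Rightarrow> nat \<Rightarrow> real) \<Rightarrow> bool" where
  "lower_tri N H \<longleftrightarrow> (\<forall>k j. 1 \<le> k \<and> k \<le> N - 1 \<and> 1 \<le> j \<and> j \<le> N - 1 \<and> k < j \<longrightarrow> H k j = 0)"

definition antidiag_transpose :: "nat \<Rightarrow> (nat \<Rightarrow> nat \<Rightarrow> real) \<Rightarrow> (nat \<Rightarrow> nat \<Rightarrow> real)" where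
  "antidiag_transpose N H = (\<lambda>k j. H (N - j) (N - k))"

text \<open>y_{k+1} = y_k - sum_{j=0}^k h_{k+1,j+1} (y_j - T y_j), with y_j - T y_j = 2 g_{j+1}.\<close>
primrec yseq :: "(nat \<Rightarrow> nat \<Rightarrow> real) \<Rightarrow> (nat \<Rightarrow> 'a::real_vector) \<Rightarrow> 'a \<Rightarrow> nat \<Rightarrow> 'a" where
  "yseq H g y0 0 = y0"
| "yseq H g y0 (Suc k) = yseq H g y0 k - (\<Sum>j\<le>k. H (Suc k) (Suc j) *\<^sub>R (2 *\<^sub>R g (Suc j)))"

text \<open>x_{k+1} = J_A(y_k) = y_k - (tilde A) x_{k+1}.\<close>
definition xseq :: "(nat \<Rightarrow> nat \<Rightarrow> real) \<Rightarrow> (nat \<Rightarrow> 'a::real_vector) \<Rightarrow> 'a \<Rightarrow> nat \<Rightarrow> 'a" where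
  "xseq H g y0 k = yseq H g y0 (k - 1) - g k"

fun Useq :: "(nat \<Rightarrow> real) \<Rightarrow> (nat \<Rightarrow> 'a::real_inner) \<Rightarrow> (nat \<Rightarrow> 'a) \<Rightarrow> nat \<Rightarrow> real" where
  "Useq u x g 0 = 0"
| "Useq u x g (Suc 0) = 0"
| "Useq u x g (Suc (Suc j)) = Useq u x g (Suc j)
      - u (Suc j) * inner (x (Suc (Suc j)) - x (Suc j)) (g (Suc (Suc j)) - g (Suc j))"

text \<open>Dual Lyapunov sequence, indexed downward: Vrec m = V_{N-1-m}; V_{N-1} = 0,
  V_j = V_{j+1} + v_{j+1} <x_N - x_{j+1}, g_N - g_{j+1}>.\<close>
primrec Vrec :: "nat \<Rightarrow> (nat \<Rightarrow> real) \<Rightarrow> (nat \<Rightarrow> 'a::real_inner) \<Rightarrow> (nat \<Rightarrow> 'a) \<Rightarrow> nat \<Rightarrow> real" where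
  "Vrec N v x g 0 = 0"
| "Vrec N v x g (Suc m) = Vrec N v x g m
      + v (N - 1 - m) * inner (x N - x (N - 1 - m)) (g N - g (N - 1 - m))"

definition Vseq :: "nat \<Rightarrow> (nat \<Rightarrow> real) \<Rightarrow> (nat \<Rightarrow> 'a::real_inner) \<Rightarrow> (nat \<Rightarrow> 'a) \<Rightarrow> nat \<Rightarrow> real" where
  "Vseq N v x g j = Vrec N v x g (N - 1 - j)"

end

theory Submission
  imports Defs
begin

definition SS :: "(nat \<Rightarrow> nat \<Rightarrow> real) \<Rightarrow> (nat \<Rightarrow> 'a::real_vector) \<Rightarrow> nat \<Rightarrow> 'a" where
  "SS H g k = (\<Sum>j=1..k. H k j *\<^sub>R g j)"

lemma yseq_step: "(\<Sum>j\<le>k. H (Suc k) (Suc j) *\<^sub>R (2 *\<^sub>R g (Suc j))) = 2 *\<^sub>R SS H g (Suc k)"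
proof -
  have "SS H g (Suc k) = (\<Sum>j=0..k. H (Suc k) (Suc j) *\<^sub>R g (Suc j))"
    unfolding SS_def using sum.shift_bounds_cl_Suc_ivl[of "\<lambda>j. H (Suc k) j *\<^sub>R g j" 0 k]
    by (simp del: sum.cl_ivl_Suc)
  then show ?thesis by (simp add: atMost_atLeast0 scaleR_sum_right mult.commute del: sum.cl_ivl_Suc)
qed

lemma yseq_diff: "a \<le> b \<Longrightarrow> yseq H g y0 b - yseq H g y0 a = - 2 *\<^sub>R (\<Sum>i=Suc a..b. SS H g i)"
proof (induction b rule: dec_induct)
  case base then show ?case by simp
next
  case (step b)
  then show ?case by (simp only: yseq.simps yseq_step) (simp add: algebra_simps)
qed

lemma yseq_eq: "yseq H g y0 m = y0 - 2 *\<^sub>R (\<Sum>k=1..m. SS H g k)"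
  using yseq_diff[of 0 m H g y0] by (simp add: algebra_simps)

lemma xseq_diff: "1 \<le> a \<Longrightarrow> a \<le> b \<Longrightarrow> xseq H g y0 b - xseq H g y0 a = - 2 *\<^sub>R (\<Sum>i=a..b-1. SS H g i) - (g b - g a)"
  using yseq_diff[of "a-1" "b-1" H g y0] by (simp add: xseq_def algebra_simps)

lemma xseq_y0: "1 \<le> b \<Longrightarrow> xseq H g y0 b - y0 = - 2 *\<^sub>R (\<Sum>i=1..b-1. SS H g i) - g b"
  using yseq_eq[of H g y0 "b-1"] by (simp add: xseq_def algebra_simps)

lemma Useq_eq: "Useq u x g (Suc m) = - (\<Sum>k=1..m. u k * inner (x (Suc k) - x k) (g (Suc k) - g k))"
  by (induction m) auto

lemma Vrec_eq: "N \<ge> 1 \<Longrightarrow> M \<le> N - 1 \<Longrightarrow> Vrec N v x g M = (\<Sum>m=N-M..N-1. v m * inner (x N - x m) (g N - g m))"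
proof (induction M)
  case 0 then show ?case by simp
next
  case (Suc M)
  have e: "N - Suc M = N - 1 - M" by simp
  have "(\<Sum>m=N-Suc M..N-1. v m * inner (x N - x m) (g N - g m)) = v (N-1-M) * inner (x N - x (N-1-M)) (g N - g (N-1-M)) + (\<Sum>m=Suc (N-1-M)..N-1. v m * inner (x N - x m) (g N - g m))"
    unfolding e using Suc.prems by (subst sum.atLeast_Suc_atMost) auto
  moreover have "Suc (N-1-M) = N - M" using Suc.prems by simp
  ultimately show ?case using Suc by simp
qed

lemma Vseq_eq: "N \<ge> 1 \<Longrightarrow> Vseq N v x g 0 = (\<Sum>m=1..N-1. v m * inner (x N - x m) (g N - g m))"
  unfolding Vseq_def by (subst Vrec_eq) auto

lemma tri_swap: "(\<Sum>m=1..(n::nat). \<Sum>i=m..n. f m i) = (\<Sum>i=1..n. \<Sum>m=1..i. (f m i :: 'b::comm_monoid_add))"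
proof -
  have "(\<Sum>m=1..n. \<Sum>i=m..n. f m i) = (\<Sum>m\<in>{1..n}. \<Sum>i\<in>{i\<in>{1..n}. m \<le> i}. f m i)"
  proof (rule sum.cong[OF refl])
    fix m assume "m \<in> {1..n}"
    then have "{i\<in>{1..n}. m \<le> i} = {m..n}" by (auto intro: le_trans[of 1 m])
    then show "(\<Sum>i=m..n. f m i) = (\<Sum>i\<in>{i\<in>{1..n}. m \<le> i}. f m i)" by simp
  qed
  also have "\<dots> = (\<Sum>i\<in>{1..n}. \<Sum>m\<in>{m\<in>{1..n}. m \<le> i}. f m i)"
    by (rule sum.swap_restrict) (rule finite_atLeastAtMost)+
  also have "\<dots> = (\<Sum>i=1..n. \<Sum>m=1..i. f m i)"
  proof (rule sum.cong[OF refl])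
    fix i assume "i \<in> {1..n}"
    then have "{m\<in>{1..n}. m \<le> i} = {1..i}" by auto
    then show "(\<Sum>m\<in>{m\<in>{1..n}. m \<le> i}. f m i) = (\<Sum>m=1..i. f m i)" by simp
  qed
  finally show ?thesis .
qed

lemma Pa_eq:
  fixes g :: "nat \<Rightarrow> 'a::real_inner"
  assumes "N \<ge> 2"
  shows "Useq u (xseq H g y0) g N - \<tau> * (norm (g N))\<^sup>2 - inner (g N) (xseq H g y0 N - y0)
   = (\<Sum>k=1..N-1. u k * (norm (g (Suc k) - g k))\<^sup>2) + (1-\<tau>) * (norm (g N))\<^sup>2
     + 2 * (\<Sum>k=1..N-1. inner (SS H g k) (u k *\<^sub>R (g (Suc k) - g k) + g N))"
proof -
  obtain M where N: "N = Suc M" using assms by (cases N) auto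
  let ?x = "xseq H g y0"
  have t: "- (u k * inner (?x (Suc k) - ?x k) (g (Suc k) - g k)) = u k * (norm (g (Suc k) - g k))\<^sup>2 + 2 * (u k * inner (SS H g k) (g (Suc k) - g k))"
    if "k \<in> {1..M}" for k
  proof -
    have "?x (Suc k) - ?x k = - 2 *\<^sub>R SS H g k - (g (Suc k) - g k)"
      using xseq_diff[of k "Suc k" H g y0] that by simp
    then have "inner (?x (Suc k) - ?x k) (g (Suc k) - g k) = - 2 * inner (SS H g k) (g (Suc k) - g k) - (norm (g (Suc k) - g k))\<^sup>2"
      by (simp add: inner_diff_left power2_norm_eq_inner)
    then show ?thesis by (simp only:) (simp add: algebra_simps)
  qed
  have y: "?x N - y0 = - 2 *\<^sub>R (\<Sum>i=1..M. SS H g i) - g N"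
    using xseq_y0[of N H g y0] N by simp
  have "Useq u ?x g N = (\<Sum>k=1..M. u k * (norm (g (Suc k) - g k))\<^sup>2) + 2 * (\<Sum>k=1..M. u k * inner (SS H g k) (g (Suc k) - g k))"
    unfolding N Useq_eq sum_negf[symmetric] using t by (simp add: sum.distrib sum_distrib_left)
  moreover have "(\<Sum>k=1..M. inner (SS H g k) (u k *\<^sub>R (g (Suc k) - g k) + g N))
     = (\<Sum>k=1..M. u k * inner (SS H g k) (g (Suc k) - g k)) + inner (\<Sum>i=1..M. SS H g i) (g N)"
    by (simp add: inner_add_right inner_sum_left sum.distrib)
  moreover have "inner (g N) (?x N - y0) = - 2 * inner (\<Sum>i=1..M. SS H g i) (g N) - (norm (g N))\<^sup>2"
    unfolding y by (simp add: inner_diff_right power2_norm_eq_inner inner_commute)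
  ultimately show ?thesis using N by (simp add: algebra_simps)
qed

lemma Pb_eq:
  fixes g :: "nat \<Rightarrow> 'a::real_inner"
  assumes "N \<ge> 2"
  shows "- Vseq N v (xseq H g y0) g 0 - \<tau> * (norm (g N))\<^sup>2 - inner (g N) (xseq H g y0 N - y0)
   = (\<Sum>m=1..N-1. v m * (norm (g N - g m))\<^sup>2) + (1-\<tau>) * (norm (g N))\<^sup>2
     + 2 * (\<Sum>i=1..N-1. inner (SS H g i) (g N + (\<Sum>m=1..i. v m *\<^sub>R (g N - g m))))"
proof -
  let ?x = "xseq H g y0"
  have t: "- (v m * inner (?x N - ?x m) (g N - g m)) = v m * (norm (g N - g m))\<^sup>2 + 2 * (v m * (\<Sum>i=m..N-1. inner (SS H g i) (g N - g m)))"
    if "m \<in> {1..N-1}" for m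
  proof -
    have "?x N - ?x m = - 2 *\<^sub>R (\<Sum>i=m..N-1. SS H g i) - (g N - g m)"
      by (rule xseq_diff) (use that in auto)
    then have e: "inner (?x N - ?x m) (g N - g m) = - 2 * inner (\<Sum>i=m..N-1. SS H g i) (g N - g m) - (norm (g N - g m))\<^sup>2"
      by (simp add: inner_diff_left power2_norm_eq_inner)
    show ?thesis unfolding inner_sum_left[symmetric] e by (simp add: algebra_simps)
  qed
  have y: "?x N - y0 = - 2 *\<^sub>R (\<Sum>i=1..N-1. SS H g i) - g N"
    using xseq_y0[of N H g y0] assms by simp
  have V: "Vseq N v ?x g 0 = (\<Sum>m=1..N-1. v m * inner (?x N - ?x m) (g N - g m))"
    using assms by (simp add: Vseq_eq)
  have "- Vseq N v ?x g 0 = (\<Sum>m=1..N-1. v m * (norm (g N - g m))\<^sup>2) + 2 * (\<Sum>m=1..N-1. \<Sum>i=m..N-1. v m * inner (SS H g i) (g N - g m))"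
    unfolding V sum_negf[symmetric] using t by (simp add: sum.distrib sum_distrib_left)
  moreover have "(\<Sum>m=1..N-1. \<Sum>i=m..N-1. v m * inner (SS H g i) (g N - g m)) = (\<Sum>i=1..N-1. \<Sum>m=1..i. v m * inner (SS H g i) (g N - g m))"
    by (rule tri_swap)
  moreover have "(\<Sum>i=1..N-1. inner (SS H g i) (g N + (\<Sum>m=1..i. v m *\<^sub>R (g N - g m))))
     = (\<Sum>i=1..N-1. \<Sum>m=1..i. v m * inner (SS H g i) (g N - g m)) + inner (\<Sum>i=1..N-1. SS H g i) (g N)"
    by (simp add: inner_add_right inner_sum_left inner_sum_right sum.distrib)
  moreover have "inner (g N) (?x N - y0) = - 2 * inner (\<Sum>i=1..N-1. SS H g i) (g N) - (norm (g N))\<^sup>2"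
    unfolding y by (simp add: inner_diff_right power2_norm_eq_inner inner_commute)
  ultimately show ?thesis by (simp add: algebra_simps)
qed

definition Tm :: "nat \<Rightarrow> (nat \<Rightarrow> real) \<Rightarrow> (nat \<Rightarrow> 'a::real_vector) \<Rightarrow> nat \<Rightarrow> 'a" where
  "Tm N v g j = (if 1 \<le> j \<and> j \<le> N - 1 then g N + (\<Sum>l=1..N-j. v l *\<^sub>R (g N - g l)) else g j)"

lemma Tm_form: "1 \<le> j \<Longrightarrow> j \<le> N \<Longrightarrow> Tm N v g j = g N + (\<Sum>l=1..N-j. v l *\<^sub>R (g N - g l))"
  by (cases "j = N") (auto simp: Tm_def)

lemma Tm_N: "Tm N v g N = g N"
  by (simp add: Tm_def)

lemma Tm_diff:
  assumes "1 \<le> k" "k \<le> N - 1"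
  shows "Tm N v g (Suc k) - Tm N v g k = - v (N-k) *\<^sub>R (g N - g (N-k))"
proof -
  have e: "N - k = Suc (N - Suc k)" using assms by auto
  have "Tm N v g k = g N + (\<Sum>l=1..N - Suc k. v l *\<^sub>R (g N - g l)) + v (N-k) *\<^sub>R (g N - g (N-k))"
    using assms by (subst Tm_form) (auto simp: e)
  moreover have "Tm N v g (Suc k) = g N + (\<Sum>l=1..N - Suc k. v l *\<^sub>R (g N - g l))"
    using assms by (subst Tm_form) auto
  ultimately show ?thesis by simp
qed

lemma tri_rev: "(\<Sum>k=1..(n::nat). \<Sum>j=1..k. f k j) = (\<Sum>i=1..n. \<Sum>j=1..i. (f (Suc n - j) (Suc n - i) :: 'b::comm_monoid_add))"
proof -
  have "(\<Sum>k=1..n. \<Sum>j=1..k. f k j) = sum (\<lambda>(k,j). f k j) (SIGMA k:{1..n}. {1..k})"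
    by (simp add: sum.Sigma)
  also have "\<dots> = sum (\<lambda>(i,j). f (Suc n - j) (Suc n - i)) (SIGMA i:{1..n}. {1..i})"
    by (rule sum.reindex_bij_witness[where i="\<lambda>(i,j). (Suc n - j, Suc n - i)" and j="\<lambda>(k,j). (Suc n - j, Suc n - k)"]) auto
  also have "\<dots> = (\<Sum>i=1..n. \<Sum>j=1..i. f (Suc n - j) (Suc n - i))"
    by (simp add: sum.Sigma)
  finally show ?thesis .
qed

lemma key:
  fixes g :: "nat \<Rightarrow> 'a::real_inner"
  assumes N: "N \<ge> 2" and uv: "\<forall>k. 1 \<le> k \<and> k \<le> N - 1 \<longrightarrow> u k * v (N - k) = 1"
  shows "- Vseq N v (xseq (antidiag_transpose N H) g y0) g 0 - \<tau> * (norm (g N))\<^sup>2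
            - inner (g N) (xseq (antidiag_transpose N H) g y0 N - y0)
     = Useq u (xseq H (Tm N v g) y0) (Tm N v g) N - \<tau> * (norm (Tm N v g N))\<^sup>2
            - inner (Tm N v g N) (xseq H (Tm N v g) y0 N - y0)"
proof -
  let ?G = "Tm N v g"
  let ?HA = "antidiag_transpose N H"
  have i: "(\<Sum>k=1..N-1. u k * (norm (?G (Suc k) - ?G k))\<^sup>2) = (\<Sum>m=1..N-1. v m * (norm (g N - g m))\<^sup>2)"
  proof -
    have "(\<Sum>k=1..N-1. u k * (norm (?G (Suc k) - ?G k))\<^sup>2) = (\<Sum>k=1..N-1. v (N-k) * (norm (g N - g (N-k)))\<^sup>2)"
    proof (rule sum.cong[OF refl])
      fix k assume k: "k \<in> {1..N-1}"
      have "u k * (norm (?G (Suc k) - ?G k))\<^sup>2 = (u k * v (N-k)) * v (N-k) * (norm (g N - g (N-k)))\<^sup>2"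
        using k by (simp add: Tm_diff power2_eq_square)
      moreover have uk: "u k * v (N-k) = 1" using uv k by auto
      ultimately show "u k * (norm (?G (Suc k) - ?G k))\<^sup>2 = v (N-k) * (norm (g N - g (N-k)))\<^sup>2"
        by simp
    qed
    also have "\<dots> = (\<Sum>m=1..N-1. v m * (norm (g N - g m))\<^sup>2)"
      using sum.atLeastAtMost_rev[of "\<lambda>m. v m * (norm (g N - g m))\<^sup>2" 1 "N-1"] N
      by (simp add: Suc_diff_le)
    finally show ?thesis .
  qed
  have iii: "(\<Sum>k=1..N-1. inner (SS H ?G k) (u k *\<^sub>R (?G (Suc k) - ?G k) + ?G N))
     = (\<Sum>i=1..N-1. inner (SS ?HA g i) (g N + (\<Sum>m=1..i. v m *\<^sub>R (g N - g m))))"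
  proof -
    have "(\<Sum>k=1..N-1. inner (SS H ?G k) (u k *\<^sub>R (?G (Suc k) - ?G k) + ?G N))
       = (\<Sum>k=1..N-1. \<Sum>j=1..k. H k j * inner (?G j) (g (N-k)))"
    proof (rule sum.cong[OF refl])
      fix k assume k: "k \<in> {1..N-1}"
      have "u k *\<^sub>R (?G (Suc k) - ?G k) + ?G N = - (u k * v (N-k)) *\<^sub>R (g N - g (N-k)) + g N"
        using k by (simp add: Tm_diff Tm_N)
      also have "\<dots> = g (N-k)" using uv k by simp
      finally show "inner (SS H ?G k) (u k *\<^sub>R (?G (Suc k) - ?G k) + ?G N) = (\<Sum>j=1..k. H k j * inner (?G j) (g (N-k)))"
        by (simp add: SS_def inner_sum_left)
    qed
    also have "\<dots> = (\<Sum>i=1..N-1. \<Sum>j=1..i. H (Suc (N-1) - j) (Suc (N-1) - i) * inner (?G (Suc (N-1) - i)) (g (N - (Suc (N-1) - j))))"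
      by (rule tri_rev)
    also have "\<dots> = (\<Sum>i=1..N-1. \<Sum>j=1..i. ?HA i j * inner (g j) (?G (N - i)))"
    proof (intro sum.cong refl)
      fix i j assume i: "i \<in> {1..N-1}" and j: "j \<in> {1..i}"
      have "Suc (N-1) = N" using N by simp
      moreover have "N - (N - j) = j" using i j by auto
      ultimately show "H (Suc (N-1) - j) (Suc (N-1) - i) * inner (?G (Suc (N-1) - i)) (g (N - (Suc (N-1) - j)))
          = ?HA i j * inner (g j) (?G (N - i))"
        by (simp add: antidiag_transpose_def inner_commute)
    qed
    also have "\<dots> = (\<Sum>i=1..N-1. inner (SS ?HA g i) (g N + (\<Sum>m=1..i. v m *\<^sub>R (g N - g m))))"
    proof (rule sum.cong[OF refl])
      fix i assume i: "i \<in> {1..N-1}"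
      have "?G (N - i) = g N + (\<Sum>m=1..i. v m *\<^sub>R (g N - g m))"
        using i by (subst Tm_form) auto
      then show "(\<Sum>j=1..i. ?HA i j * inner (g j) (?G (N - i))) = inner (SS ?HA g i) (g N + (\<Sum>m=1..i. v m *\<^sub>R (g N - g m)))"
        by (simp add: SS_def inner_sum_left)
    qed
    finally show ?thesis .
  qed
  have a: "Useq u (xseq H ?G y0) ?G N - \<tau> * (norm (?G N))\<^sup>2 - inner (?G N) (xseq H ?G y0 N - y0)
   = (\<Sum>k=1..N-1. u k * (norm (?G (Suc k) - ?G k))\<^sup>2) + (1-\<tau>) * (norm (?G N))\<^sup>2
     + 2 * (\<Sum>k=1..N-1. inner (SS H ?G k) (u k *\<^sub>R (?G (Suc k) - ?G k) + ?G N))"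
    by (rule Pa_eq[OF N])
  show ?thesis
    using a i iii by (simp add: Pb_eq[OF N] Tm_N)
qed

lemma telesc: "n \<le> N \<Longrightarrow> (\<Sum>l=1..n. g (N-l) - g (Suc (N-l))) = g (N-n) - (g N :: 'a::ab_group_add)"
proof (induction n)
  case 0 then show ?case by simp
next
  case (Suc n)
  then have "Suc (N - Suc n) = N - n" by simp
  with Suc show ?case by simp
qed

lemma Tm_inv:
  assumes v: "\<forall>m. 1 \<le> m \<and> m \<le> N-1 \<longrightarrow> v m \<noteq> 0"
  shows "Tm N v (\<lambda>m. if 1 \<le> m \<and> m \<le> N - 1 then g N - (1 / v m) *\<^sub>R (g (N-m) - g (Suc (N-m))) else g m) = (g :: nat \<Rightarrow> 'a::real_vector)"
proof (rule ext)
  fix j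
  let ?g = "\<lambda>m. if 1 \<le> m \<and> m \<le> N - 1 then g N - (1 / v m) *\<^sub>R (g (N-m) - g (Suc (N-m))) else g m"
  show "Tm N v ?g j = g j"
  proof (cases "1 \<le> j \<and> j \<le> N - 1")
    case True
    have gN: "?g N = g N" by auto
    have "(\<Sum>l=1..N-j. v l *\<^sub>R (?g N - ?g l)) = (\<Sum>l=1..N-j. g (N-l) - g (Suc (N-l)))"
    proof (rule sum.cong[OF refl])
      fix l assume l: "l \<in> {1..N-j}"
      then have "1 \<le> l \<and> l \<le> N - 1" using True by auto
      with v have "v l \<noteq> 0" by blast
      with \<open>1 \<le> l \<and> l \<le> N - 1\<close> show "v l *\<^sub>R (?g N - ?g l) = g (N-l) - g (Suc (N-l))"
        unfolding gN by simp
    qed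
    also have "\<dots> = g j - g N"
    proof -
      have "N - (N - j) = j" using True by auto
      then show ?thesis using telesc[of "N-j" N g] by simp
    qed
    finally have S: "(\<Sum>l=1..N-j. v l *\<^sub>R (?g N - ?g l)) = g j - g N" .
    have T: "Tm N v ?g j = ?g N + (\<Sum>l=1..N-j. v l *\<^sub>R (?g N - ?g l))"
      unfolding Tm_def using True by (rule if_P)
    show ?thesis unfolding T S by (simp only: gN) simp
  next
    case False
    then show ?thesis unfolding Tm_def by (simp only: if_not_P[OF False] if_False)
  qed
qed

theorem theoremD1:
  fixes N :: nat and u v :: "nat \<Rightarrow> real" and H :: "nat \<Rightarrow> nat \<Rightarrow> real" and \<tau> :: real
  assumes "N \<ge> 2"
    and "\<forall>j. 1 \<le> j \<and> j \<le> N - 1 \<longrightarrow> u j > 0"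
    and "\<forall>j. 1 \<le> j \<and> j \<le> N - 1 \<longrightarrow> v j > 0"
    and "\<forall>j. 1 \<le> j \<and> j \<le> N - 1 \<longrightarrow> v j = 1 / u (N - j)"
    and "lower_tri N H"
    and "\<tau> > 0"
  shows "(\<forall>(g :: nat \<Rightarrow> 'a::euclidean_space) y0.
            \<tau> * (norm (g N))\<^sup>2 + inner (g N) (xseq H g y0 N - y0)
              \<le> Useq u (xseq H g y0) g N)
     \<longleftrightarrow>
         (\<forall>(g :: nat \<Rightarrow> 'a) y0.
            Vseq N v (xseq (antidiag_transpose N H) g y0) g 0
              \<le> - \<tau> * (norm (g N))\<^sup>2
                 - inner (g N) (xseq (antidiag_transpose N H) g y0 N - y0))"
proof -
  have N: "N \<ge> 2" by fact
  have uv: "\<forall>k. 1 \<le> k \<and> k \<le> N - 1 \<longrightarrow> u k * v (N - k) = 1"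
  proof (intro allI impI)
    fix k assume k: "1 \<le> k \<and> k \<le> N - 1"
    then have "1 \<le> N - k \<and> N - k \<le> N - 1" "N - (N - k) = k" by auto
    then have "v (N - k) = 1 / u k" using assms(4) by metis
    moreover have "u k > 0" using assms(2) k by blast
    ultimately show "u k * v (N - k) = 1" by simp
  qed
  have vnz: "\<forall>m. 1 \<le> m \<and> m \<le> N-1 \<longrightarrow> v m \<noteq> 0"
    using assms(3) by (metis less_irrefl)
  show ?thesis
  proof
    assume A: "\<forall>(g :: nat \<Rightarrow> 'a::euclidean_space) y0.
            \<tau> * (norm (g N))\<^sup>2 + inner (g N) (xseq H g y0 N - y0)
              \<le> Useq u (xseq H g y0) g N"
    show "\<forall>(g :: nat \<Rightarrow> 'a) y0.
            Vseq N v (xseq (antidiag_transpose N H) g y0) g 0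
              \<le> - \<tau> * (norm (g N))\<^sup>2
                 - inner (g N) (xseq (antidiag_transpose N H) g y0 N - y0)"
    proof (intro allI)
      fix g :: "nat \<Rightarrow> 'a" and y0 :: 'a
      have "\<tau> * (norm (Tm N v g N))\<^sup>2 + inner (Tm N v g N) (xseq H (Tm N v g) y0 N - y0)
              \<le> Useq u (xseq H (Tm N v g) y0) (Tm N v g) N" using A by blast
      with key[OF N uv, where g=g and ?y0.0=y0 and H=H and \<tau>=\<tau>]
      show "Vseq N v (xseq (antidiag_transpose N H) g y0) g 0
              \<le> - \<tau> * (norm (g N))\<^sup>2
                 - inner (g N) (xseq (antidiag_transpose N H) g y0 N - y0)" by linarith
    qed
  next
    assume B: "\<forall>(g :: nat \<Rightarrow> 'a) y0.
            Vseq N v (xseq (antidiag_transpose N H) g y0) g 0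
              \<le> - \<tau> * (norm (g N))\<^sup>2
                 - inner (g N) (xseq (antidiag_transpose N H) g y0 N - y0)"
    show "\<forall>(g :: nat \<Rightarrow> 'a::euclidean_space) y0.
            \<tau> * (norm (g N))\<^sup>2 + inner (g N) (xseq H g y0 N - y0)
              \<le> Useq u (xseq H g y0) g N"
    proof (intro allI)
      fix g :: "nat \<Rightarrow> 'a" and y0 :: 'a
      define g' where "g' = (\<lambda>m. if 1 \<le> m \<and> m \<le> N - 1 then g N - (1 / v m) *\<^sub>R (g (N-m) - g (Suc (N-m))) else g m)"
      have Tg: "Tm N v g' = g" unfolding g'_def using Tm_inv[OF vnz] .
      have "Vseq N v (xseq (antidiag_transpose N H) g' y0) g' 0
              \<le> - \<tau> * (norm (g' N))\<^sup>2
                 - inner (g' N) (xseq (antidiag_transpose N H) g' y0 N - y0)" using B by blast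
      with key[OF N uv, where g=g' and ?y0.0=y0 and H=H and \<tau>=\<tau>]
      show "\<tau> * (norm (g N))\<^sup>2 + inner (g N) (xseq H g y0 N - y0)
              \<le> Useq u (xseq H g y0) g N" unfolding Tg by linarith
    qed
  qed
qed

end
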